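(* Assume a single budget constraint with costs $c_I>0$ for all $I\in\mathcal I$, $\Sigma$ symmetric positive definite, $a\neq0$ with $\operatorname{supp}(a)\subseteq\bigcup\mathcal I$. Let $\underline\nu^*\in\mathbb{R}^{\mathcal I}_{\ge0}$ minimize $V_1$ over real allocations with budget $1$, and for $B>0$ let $\underline n_{\mathrm{round}}=\lfloor B\underline\nu^*\rfloor$ (componentwise floor), let $\underline n^*_{\mathrm{frac}}$ minimize $V_B$ over real feasible allocations and $\underline n^*_{\mathrm{int}}$ minimize $V_B$ over integer feasible allocations. Then $\lim_{B\to\infty}B\,V_B(\underline n_{\mathrm{round}})=V_1(\underline\nu^* )=B\,V_B(\underline n^*_{\mathrm{frac}})$, and consequently \[ \lim_{B\to\infty}\frac{V_B(\underline n^*_{\mathrm{frac}})}{V_B(\underline n^*_{\mathrm{int}})}=1 . \]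
   Context: $\mathcal I$ is a collection of nonempty subsets of $\{1,\dots,k\}$; $P_I:\mathbb{R}^k\to\mathbb{R}^{|I|}$ the coordinate projection onto $I$; $\Sigma_I=P_I\Sigma P_I^\top$. For $\underline n\in\mathbb{R}^{\mathcal I}_{\ge0}$, $V_B(\underline n)=a^\top\big(\sum_In_IP_I^\top\Sigma_I^{-1}P_I\big)^\dagger a$ ($\dagger$ = Moore–Penrose pseudo-inverse); $\underline n$ is feasible for budget $B$ if $n_I\ge0$, $\sum_Ic_In_I\le B$, and $\operatorname{supp}(a)\subseteq\bigcup\{I:n_I>0\}$. *)

theory Defs
  imports "HOL-Analysis.Analysis"
begin

text \<open>Index set {1..k} is modelled by a finite type 'n; matrices are real^'n^'n.\<close>

definition mp_pinv :: "real^'n^'n \<Rightarrow> real^'n^'n" where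
  "mp_pinv A = (THE X. A ** X ** A = A \<and> X ** A ** X = X \<and>
      transpose (A ** X) = A ** X \<and> transpose (X ** A) = X ** A)"

text \<open>The k x k matrix P_I^T (Sigma_I)^{-1} P_I: it vanishes outside I x I, and its
  I x I block is the inverse of the principal submatrix Sigma_I = P_I Sigma P_I^T.\<close>
definition embed_sub_inv :: "real^'n^'n \<Rightarrow> 'n set \<Rightarrow> real^'n^'n" where
  "embed_sub_inv S I = (THE X. (\<forall>i j. (i \<notin> I \<or> j \<notin> I) \<longrightarrow> X $ i $ j = 0) \<and>
      (\<forall>i\<in>I. \<forall>j\<in>I. (\<Sum>l\<in>I. S $ i $ l * X $ l $ j) = (if i = j then 1 else 0)))"

text \<open>Variance functional V_B(n) = a^T (sum_I n_I P_I^T Sigma_I^{-1} P_I)^+ a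
  (it does not depend on B).\<close>
definition Var :: "'n set set \<Rightarrow> real^'n^'n \<Rightarrow> real^'n \<Rightarrow> ('n set \<Rightarrow> real) \<Rightarrow> real" where
  "Var \<I> S a n = a \<bullet> (mp_pinv (\<Sum>I\<in>\<I>. n I *\<^sub>R embed_sub_inv S I) *v a)"

definition feasible :: "'n set set \<Rightarrow> ('n set \<Rightarrow> real) \<Rightarrow> real^'n \<Rightarrow> real \<Rightarrow> ('n set \<Rightarrow> real) \<Rightarrow> bool" where
  "feasible \<I> c a B n \<longleftrightarrow> (\<forall>I\<in>\<I>. n I \<ge> 0) \<and> (\<Sum>I\<in>\<I>. c I * n I) \<le> B \<and>
      {i. a $ i \<noteq> 0} \<subseteq> \<Union>{I\<in>\<I>. n I > 0}"

definition integral_alloc :: "'n set set \<Rightarrow> ('n set \<Rightarrow> real) \<Rightarrow> bool" where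
  "integral_alloc \<I> n \<longleftrightarrow> (\<forall>I\<in>\<I>. n I \<in> \<int>)"

end

theory Submission
  imports Defs "HOL-Real_Asymp.Real_Asymp"
begin

definition supp_on :: "'n set \<Rightarrow> real^'n \<Rightarrow> bool" where
  "supp_on U x \<longleftrightarrow> (\<forall>i. i \<notin> U \<longrightarrow> x $ i = 0)"

definition blk :: "real^'n^'n \<Rightarrow> 'n set \<Rightarrow> real^'n^'n \<Rightarrow> bool" where
  "blk M U X \<longleftrightarrow> (\<forall>i j. (i \<notin> U \<or> j \<notin> U) \<longrightarrow> X $ i $ j = 0) \<and>
      (\<forall>i\<in>U. \<forall>j\<in>U. (\<Sum>l\<in>U. M $ i $ l * X $ l $ j) = (if i = j then 1 else 0))"

lemma sym_inner:
  fixes M :: "real^'n^'n"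
  assumes "transpose M = M"
  shows "x \<bullet> (M *v y) = (M *v x) \<bullet> y"
  by (metis assms dot_lmul_matrix transpose_matrix_vector)

lemma sum_supp_cong:
  fixes x :: "real^'n"
  assumes "supp_on U x" "\<And>i. i \<in> U \<Longrightarrow> f i = g i"
  shows "(\<Sum>i\<in>UNIV. x $ i * f i) = (\<Sum>i\<in>UNIV. x $ i * g i)"
  using assms unfolding supp_on_def by (intro sum.cong) auto

lemma blk_exists:
  fixes M :: "real^'n^'n"
  assumes pd: "\<And>x. x \<noteq> 0 \<Longrightarrow> supp_on U x \<Longrightarrow> x \<bullet> (M *v x) > 0"
  shows "\<exists>X. blk M U X"
proof -
  define f where "f = (\<lambda>x::real^'n. \<chi> i. if i \<in> U then (M *v x) $ i else x $ i)"
  have lin: "linear f"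
    unfolding f_def by (intro linearI) (auto simp: vec_eq_iff algebra_simps)
  have inj: "inj f"
  proof (rule linear_injective_0[THEN iffD2, OF lin], intro allI impI)
    fix x assume fx: "f x = 0"
    have su: "supp_on U x" unfolding supp_on_def
    proof (intro allI impI)
      fix i assume "i \<notin> U"
      from fx have "f x $ i = 0" by simp
      then show "x $ i = 0" using \<open>i \<notin> U\<close> by (simp add: f_def)
    qed
    have "x \<bullet> (M *v x) = (\<Sum>i\<in>UNIV. x $ i * 0)"
      unfolding inner_vec_def inner_real_def
    proof (rule sum_supp_cong[OF su])
      fix i assume i: "i \<in> U"
      from fx have "f x $ i = 0" by simp
      then show "(M *v x) $ i = 0" using i by (simp add: f_def)
    qed
    then have "x \<bullet> (M *v x) = 0" by simp
    then show "x = 0" using pd[OF _ su] by force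
  qed
  have "surj f" using linear_injective_imp_surjective[OF lin inj] by simp
  define g where "g = (\<lambda>j. inv f (axis j (1::real)))"
  have g: "\<And>j. f (g j) = axis j 1" unfolding g_def using \<open>surj f\<close> by (simp add: surj_f_inv_f)
  define X where "X = (\<chi> i j. if i \<in> U \<and> j \<in> U then g j $ i else 0)"
  have gs: "supp_on U (g j)" if "j \<in> U" for j
    unfolding supp_on_def
  proof (intro allI impI)
    fix i assume i: "i \<notin> U"
    have "f (g j) $ i = axis j 1 $ i" by (simp add: g)
    then show "g j $ i = 0" using i that by (simp add: f_def axis_def split: if_splits)
  qed
  have "blk M U X"
    unfolding blk_def
  proof (intro conjI ballI allI impI)
    fix i j assume "i \<notin> U \<or> j \<notin> U" then show "X $ i $ j = 0" by (auto simp: X_def)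
  next
    fix i j assume i: "i \<in> U" and j: "j \<in> U"
    have "(\<Sum>l\<in>U. M $ i $ l * X $ l $ j) = (\<Sum>l\<in>UNIV. M $ i $ l * g j $ l)"
    proof (rule sum.mono_neutral_cong_left)
      show "\<forall>l\<in>UNIV - U. M $ i $ l * g j $ l = 0" using gs[OF j] unfolding supp_on_def by simp
      show "\<And>l. l \<in> U \<Longrightarrow> M $ i $ l * X $ l $ j = M $ i $ l * g j $ l" using j by (simp add: X_def)
    qed auto
    also have "\<dots> = (M *v g j) $ i" by (simp add: matrix_vector_mult_def)
    also have "\<dots> = f (g j) $ i" using i by (simp add: f_def)
    also have "\<dots> = (if i = j then 1 else 0)" by (simp add: g axis_def)
    finally show "(\<Sum>l\<in>U. M $ i $ l * X $ l $ j) = (if i = j then 1 else 0)" .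
  qed
  then show ?thesis by blast
qed

lemma mv_supp:
  fixes M :: "real^'n^'n"
  assumes "supp_on U z"
  shows "(M *v z) $ i = (\<Sum>l\<in>U. M $ i $ l * z $ l)"
proof -
  have "(M *v z) $ i = (\<Sum>l\<in>UNIV. M $ i $ l * z $ l)" by (simp add: matrix_vector_mult_def)
  also have "\<dots> = (\<Sum>l\<in>U. M $ i $ l * z $ l)"
    using assms unfolding supp_on_def by (intro sum.mono_neutral_cong_right) auto
  finally show ?thesis .
qed

lemma blk_row:
  assumes "blk M U X" "i \<in> U"
  shows "(\<Sum>l\<in>U. M $ i $ l * X $ l $ j) = (if i = j then 1 else 0)"
proof (cases "j \<in> U")
  case True then show ?thesis using assms unfolding blk_def by blast
next
  case False
  then have "\<And>l. X $ l $ j = 0" using assms unfolding blk_def by blast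
  then show ?thesis using False assms(2) by auto
qed

lemma blk_supp:
  assumes "blk M U X"
  shows "supp_on U (X *v x)"
  using assms unfolding blk_def supp_on_def by (simp add: matrix_vector_mult_def)

lemma blk_inv:
  assumes "blk M U X" "i \<in> U"
  shows "(M *v (X *v x)) $ i = x $ i"
proof -
  have "(M *v (X *v x)) $ i = (\<Sum>l\<in>U. M $ i $ l * (\<Sum>j\<in>UNIV. X $ l $ j * x $ j))"
    using mv_supp[OF blk_supp[OF assms(1)]] by (simp add: matrix_vector_mult_def)
  also have "\<dots> = (\<Sum>j\<in>UNIV. (\<Sum>l\<in>U. M $ i $ l * X $ l $ j) * x $ j)"
    by (simp add: sum_distrib_left sum_distrib_right sum.swap[of _ U] ac_simps)
  also have "\<dots> = (\<Sum>j\<in>UNIV. (if i = j then 1 else 0) * x $ j)"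
    using blk_row[OF assms] by simp
  also have "\<dots> = (\<Sum>j\<in>UNIV. if i = j then x $ j else 0)" by (intro sum.cong) auto
  also have "\<dots> = x $ i" by simp
  finally show ?thesis .
qed

lemma blk_uniq:
  fixes M :: "real^'n^'n"
  assumes pd: "\<And>x. x \<noteq> 0 \<Longrightarrow> supp_on U x \<Longrightarrow> x \<bullet> (M *v x) > 0"
    and X: "blk M U X" and Y: "blk M U Y"
  shows "X = Y"
proof -
  have "X $ i $ j = Y $ i $ j" for i j
  proof (cases "j \<in> U")
    case False then show ?thesis using X Y unfolding blk_def by simp
  next
    case j: True
    define z where "z = (\<chi> l. X $ l $ j - Y $ l $ j)"
    have zs: "supp_on U z" using X Y unfolding z_def blk_def supp_on_def by simp
    have Mz: "(M *v z) $ i' = 0" if "i' \<in> U" for i'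
    proof -
      have "(M *v z) $ i' = (\<Sum>l\<in>U. M $ i' $ l * X $ l $ j) - (\<Sum>l\<in>U. M $ i' $ l * Y $ l $ j)"
        unfolding mv_supp[OF zs] by (simp add: z_def algebra_simps sum_subtractf)
      then show ?thesis using blk_row[OF X that] blk_row[OF Y that] by simp
    qed
    have "z \<bullet> (M *v z) = (\<Sum>i\<in>UNIV. z $ i * 0)"
      unfolding inner_vec_def inner_real_def by (rule sum_supp_cong[OF zs]) (simp add: Mz)
    then have "z = 0" using pd[OF _ zs] by force
    then show ?thesis unfolding z_def by (simp add: vec_eq_iff)
  qed
  then show ?thesis by (simp add: vec_eq_iff)
qed

lemma blk_sym:
  fixes M :: "real^'n^'n"
  assumes sym: "transpose M = M" and X: "blk M U X"
  shows "transpose X = X"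
proof -
  have key: "(X *v z) \<bullet> x = z \<bullet> (X *v x)" for x z
  proof -
    define y where "y = X *v x"
    define w where "w = X *v z"
    have "w \<bullet> (M *v y) = (\<Sum>i\<in>UNIV. w $ i * x $ i)"
      unfolding inner_vec_def inner_real_def
      by (rule sum_supp_cong) (use blk_inv[OF X] blk_supp[OF X] in \<open>auto simp: w_def y_def\<close>)
    also have "\<dots> = w \<bullet> x" by (simp add: inner_vec_def)
    finally have 1: "w \<bullet> (M *v y) = w \<bullet> x" .
    have "w \<bullet> (M *v y) = y \<bullet> (M *v w)" using sym_inner[OF sym] inner_commute by metis
    also have "\<dots> = (\<Sum>i\<in>UNIV. y $ i * z $ i)"
      unfolding inner_vec_def inner_real_def
      by (rule sum_supp_cong) (use blk_inv[OF X] blk_supp[OF X] in \<open>auto simp: w_def y_def\<close>)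
    also have "\<dots> = z \<bullet> y" by (simp add: inner_vec_def mult.commute)
    finally show ?thesis using 1 by (simp add: w_def y_def)
  qed
  have "X *v z = transpose X *v z" for z
  proof -
    have "(X *v z - transpose X *v z) \<bullet> x = 0" for x
      using key[of z x] by (simp add: inner_diff_left dot_lmul_matrix)
    then show ?thesis by (metis eq_iff_diff_eq_0 inner_eq_zero_iff)
  qed
  then show ?thesis by (metis matrix_eq)
qed

lemma blk_psd:
  fixes M :: "real^'n^'n"
  assumes pd: "\<And>x. x \<noteq> 0 \<Longrightarrow> supp_on U x \<Longrightarrow> x \<bullet> (M *v x) > 0"
    and X: "blk M U X"
  shows "x \<bullet> (X *v x) \<ge> 0" and "i \<in> U \<Longrightarrow> x $ i \<noteq> 0 \<Longrightarrow> x \<bullet> (X *v x) > 0"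
proof -
  define y where "y = X *v x"
  have ys: "supp_on U y" using blk_supp[OF X] by (simp add: y_def)
  have "x \<bullet> y = (\<Sum>i\<in>UNIV. y $ i * x $ i)" by (simp add: inner_vec_def mult.commute)
  also have "\<dots> = (\<Sum>i\<in>UNIV. y $ i * (M *v y) $ i)"
    by (rule sum_supp_cong[OF ys]) (simp add: y_def blk_inv[OF X])
  also have "\<dots> = y \<bullet> (M *v y)" by (simp add: inner_vec_def)
  finally have e: "x \<bullet> (X *v x) = y \<bullet> (M *v y)" by (simp add: y_def)
  show "x \<bullet> (X *v x) \<ge> 0" unfolding e using pd[OF _ ys] by (cases "y = 0") (auto intro: less_imp_le)
  assume i: "i \<in> U" "x $ i \<noteq> 0"
  have "y \<noteq> 0"
  proof
    assume "y = 0"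
    then have "(M *v y) $ i = 0" by simp
    then show False using blk_inv[OF X i(1), of x] i(2) by (simp add: y_def)
  qed
  then show "x \<bullet> (X *v x) > 0" unfolding e using pd[OF _ ys] by auto
qed

definition penrose :: "real^'n^'n \<Rightarrow> real^'n^'n \<Rightarrow> bool" where
  "penrose A X \<longleftrightarrow> A ** X ** A = A \<and> X ** A ** X = X \<and>
      transpose (A ** X) = A ** X \<and> transpose (X ** A) = X ** A"

lemma penrose_uniq:
  assumes X: "penrose A X" and Y: "penrose A Y"
  shows "X = Y"
proof -
  have x1: "A ** X ** A = A" "X ** A ** X = X" "transpose (A ** X) = A ** X" "transpose (X ** A) = X ** A"
    using X unfolding penrose_def by auto
  have y1: "A ** Y ** A = A" "Y ** A ** Y = Y" "transpose (A ** Y) = A ** Y" "transpose (Y ** A) = Y ** A"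
    using Y unfolding penrose_def by auto
  have AX: "A ** X = A ** Y"
  proof -
    have "A ** X = (A ** Y) ** (A ** X)" by (metis y1(1) matrix_mul_assoc)
    then have "A ** X = transpose ((A ** Y) ** (A ** X))" using x1(3) by metis
    also have "\<dots> = (A ** X) ** (A ** Y)" by (subst matrix_transpose_mul) (simp only: x1(3) y1(3))
    also have "\<dots> = A ** Y" by (metis x1(1) matrix_mul_assoc)
    finally show ?thesis .
  qed
  have XA: "X ** A = Y ** A"
  proof -
    have "X ** A = (X ** A) ** (Y ** A)" by (metis y1(1) matrix_mul_assoc)
    then have "X ** A = transpose ((X ** A) ** (Y ** A))" using x1(4) by metis
    also have "\<dots> = (Y ** A) ** (X ** A)" by (subst matrix_transpose_mul) (simp only: x1(4) y1(4))
    also have "\<dots> = Y ** A" by (metis x1(1) matrix_mul_assoc)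
    finally show ?thesis .
  qed
  have "X = X ** (A ** X)" by (metis x1(2) matrix_mul_assoc)
  also have "\<dots> = X ** (A ** Y)" by (simp add: AX)
  also have "\<dots> = (Y ** A) ** Y" by (metis XA matrix_mul_assoc)
  also have "\<dots> = Y" by (simp add: y1(2))
  finally show ?thesis .
qed

lemma mp_pinv_eq:
  assumes "penrose A X"
  shows "mp_pinv A = X"
  unfolding mp_pinv_def
  by (rule the_equality) (use assms penrose_uniq in \<open>auto simp: penrose_def\<close>)

lemma diag_mul:
  fixes A :: "real^'n^'n"
  assumes "\<And>i j. i \<notin> U \<Longrightarrow> A $ i $ j = 0"
  shows "(\<chi> i j. if i = j \<and> i \<in> U then 1 else 0) ** A = A"
proof -
  have "(\<Sum>l\<in>UNIV. (if i = l \<and> i \<in> U then 1 else 0) * A $ l $ j) = A $ i $ j" for i j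
  proof -
    have "(\<Sum>l\<in>UNIV. (if i = l \<and> i \<in> U then 1 else 0) * A $ l $ j) = (\<Sum>l\<in>UNIV. if i = l then (if i \<in> U then A $ l $ j else 0) else 0)"
      by (intro sum.cong) auto
    also have "\<dots> = A $ i $ j" using assms by simp
    finally show ?thesis .
  qed
  then show ?thesis by (simp add: matrix_matrix_mult_def vec_eq_iff)
qed

lemma penrose_blk:
  fixes M :: "real^'n^'n"
  assumes sym: "transpose M = M" and Mz: "\<And>i j. i \<notin> U \<or> j \<notin> U \<Longrightarrow> M $ i $ j = 0"
    and X: "blk M U X"
  shows "penrose M X"
proof -
  define D where "D = (\<chi> i j. if i = j \<and> i \<in> U then 1 else (0::real))"
  have Xs: "transpose X = X" by (rule blk_sym[OF sym X])
  have Xz: "\<And>i j. i \<notin> U \<or> j \<notin> U \<Longrightarrow> X $ i $ j = 0" using X unfolding blk_def by blast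
  have MX: "M ** X = D"
  proof -
    have "(\<Sum>l\<in>UNIV. M $ i $ l * X $ l $ j) = D $ i $ j" for i j
    proof (cases "i \<in> U")
      case False then show ?thesis using Mz by (simp add: D_def)
    next
      case True
      have "(\<Sum>l\<in>UNIV. M $ i $ l * X $ l $ j) = (\<Sum>l\<in>U. M $ i $ l * X $ l $ j)"
        using Xz by (intro sum.mono_neutral_cong_right) auto
      also have "\<dots> = D $ i $ j" using blk_row[OF X True] True by (simp add: D_def)
      finally show ?thesis .
    qed
    then show ?thesis by (simp add: matrix_matrix_mult_def vec_eq_iff)
  qed
  have Ds: "transpose D = D" by (auto simp: D_def transpose_def vec_eq_iff)
  have XM: "X ** M = D" by (metis MX Ds Xs sym matrix_transpose_mul)
  have DM: "D ** M = M" unfolding D_def by (rule diag_mul) (use Mz in auto)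
  have DX: "D ** X = X" unfolding D_def by (rule diag_mul) (use Xz in auto)
  show ?thesis unfolding penrose_def by (simp add: MX XM DM DX Ds)
qed

lemma esi_blk:
  fixes S :: "real^'n^'n"
  assumes pd: "\<forall>x. x \<noteq> 0 \<longrightarrow> x \<bullet> (S *v x) > 0"
  shows "blk S I (embed_sub_inv S I)"
proof -
  have pd': "\<And>x. x \<noteq> 0 \<Longrightarrow> supp_on I x \<Longrightarrow> x \<bullet> (S *v x) > 0" using pd by blast
  obtain X where X: "blk S I X" using blk_exists[OF pd'] by blast
  have "embed_sub_inv S I = X"
    unfolding embed_sub_inv_def
    by (rule the_equality) (use X blk_uniq[OF pd'] in \<open>auto simp: blk_def\<close>)
  then show ?thesis using X by simp
qed

definition Mn :: "'n set set \<Rightarrow> real^'n^'n \<Rightarrow> ('n set \<Rightarrow> real) \<Rightarrow> real^'n^'n" where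
  "Mn \<I> S n = (\<Sum>I\<in>\<I>. n I *\<^sub>R embed_sub_inv S I)"

lemma sum_mv: "finite F \<Longrightarrow> (\<Sum>I\<in>F. f I) *v x = (\<Sum>I\<in>F. f I *v x)"
  by (induction F rule: finite_induct) (auto simp: matrix_vector_mult_add_rdistrib)

lemma scaleR_mv: "(c *\<^sub>R (A::real^'n^'m)) *v x = c *\<^sub>R (A *v x)"
  by (simp add: matrix_vector_mult_def vec_eq_iff sum_distrib_left ac_simps)

locale ctx =
  fixes \<I> :: "'n::finite set set" and S :: "real^'n^'n" and a :: "real^'n"
  assumes S_sym: "transpose S = S"
    and S_pd: "\<forall>x. x \<noteq> 0 \<longrightarrow> x \<bullet> (S *v x) > 0"
    and a_nz: "a \<noteq> 0"
begin

abbreviation "A I \<equiv> embed_sub_inv S I"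
abbreviation "M n \<equiv> Mn \<I> S n"
definition "adm n \<longleftrightarrow> (\<forall>I\<in>\<I>. n I \<ge> 0) \<and> {i. a $ i \<noteq> 0} \<subseteq> \<Union>{I\<in>\<I>. n I > 0}"

lemma fin: "finite \<I>" by (rule finite_subset[OF subset_UNIV]) simp

lemma A_blk: "blk S I (A I)" by (rule esi_blk[OF S_pd])

lemma A_sym: "A I $ i $ j = A I $ j $ i"
  using blk_sym[OF S_sym A_blk] by (metis transpose_def vec_lambda_beta)

lemma A_zero: "i \<notin> I \<or> j \<notin> I \<Longrightarrow> A I $ i $ j = 0"
  using A_blk unfolding blk_def by blast

lemma A_psd: "x \<bullet> (A I *v x) \<ge> 0"
  by (rule blk_psd(1)[OF _ A_blk]) (use S_pd in blast)

lemma A_pd: "i \<in> I \<Longrightarrow> x $ i \<noteq> 0 \<Longrightarrow> x \<bullet> (A I *v x) > 0"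
  by (rule blk_psd(2)[OF _ A_blk]) (use S_pd in blast)

lemma quad: "x \<bullet> (M n *v x) = (\<Sum>I\<in>\<I>. n I * (x \<bullet> (A I *v x)))"
  unfolding Mn_def sum_mv[OF fin] by (simp add: scaleR_mv inner_sum_right)

lemma M_entry: "M n $ i $ j = (\<Sum>I\<in>\<I>. n I * A I $ i $ j)"
  by (simp add: Mn_def)

lemma M_sym: "transpose (M n) = M n"
  by (simp add: vec_eq_iff transpose_def M_entry A_sym[of _ i j for i j])

lemma M_zero:
  assumes nn: "\<forall>I\<in>\<I>. n I \<ge> 0" and ij: "i \<notin> \<Union>{I\<in>\<I>. n I > 0} \<or> j \<notin> \<Union>{I\<in>\<I>. n I > 0}"
  shows "M n $ i $ j = 0"
  unfolding M_entry
proof (rule sum.neutral, rule ballI)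
  fix I assume I: "I \<in> \<I>"
  show "n I * A I $ i $ j = 0"
  proof (cases "n I > 0")
    case True then have "i \<notin> I \<or> j \<notin> I" using ij I by blast
    then show ?thesis by (simp add: A_zero)
  next
    case False then have "n I = 0" using nn I by force
    then show ?thesis by simp
  qed
qed

lemma M_psd: "\<forall>I\<in>\<I>. n I \<ge> 0 \<Longrightarrow> x \<bullet> (M n *v x) \<ge> 0"
  unfolding quad by (intro sum_nonneg) (simp add: A_psd)

lemma M_pd:
  assumes nn: "\<forall>I\<in>\<I>. n I \<ge> 0" and x: "x \<noteq> 0" and xs: "supp_on (\<Union>{I\<in>\<I>. n I > 0}) x"
  shows "x \<bullet> (M n *v x) > 0"
proof -
  obtain i where i: "x $ i \<noteq> 0" using x by (auto simp: vec_eq_iff)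
  then obtain I0 where I0: "I0 \<in> \<I>" "n I0 > 0" "i \<in> I0" using xs unfolding supp_on_def by blast
  show ?thesis unfolding quad
    by (rule sum_pos2[OF fin I0(1)]) (use I0 i nn A_pd A_psd in auto)
qed

lemma KL:
  assumes "adm n"
  shows "\<exists>y. M n *v y = a \<and> Var \<I> S a n = a \<bullet> y \<and> y \<bullet> (M n *v y) = a \<bullet> y \<and> y \<bullet> (M n *v y) > 0"
proof -
  define U where "U = \<Union>{I\<in>\<I>. n I > 0}"
  have nn: "\<forall>I\<in>\<I>. n I \<ge> 0" and asu: "{i. a $ i \<noteq> 0} \<subseteq> U"
    using assms unfolding adm_def U_def by auto
  have pd: "\<And>x. x \<noteq> 0 \<Longrightarrow> supp_on U x \<Longrightarrow> x \<bullet> (M n *v x) > 0"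
    unfolding U_def by (rule M_pd[OF nn])
  have "\<exists>X. blk (M n) U X" by (rule blk_exists, rule pd)
  then obtain X where X: "blk (M n) U X" by (elim exE)
  have Mz: "\<And>i j. i \<notin> U \<or> j \<notin> U \<Longrightarrow> M n $ i $ j = 0" unfolding U_def by (rule M_zero[OF nn])
  have pinv: "mp_pinv (M n) = X" by (rule mp_pinv_eq[OF penrose_blk[OF M_sym Mz X]])
  define y where "y = X *v a"
  have ys: "supp_on U y" unfolding y_def by (rule blk_supp[OF X])
  have My: "M n *v y = a"
  proof -
    have "(M n *v y) $ i = a $ i" for i
    proof (cases "i \<in> U")
      case True then show ?thesis unfolding y_def by (rule blk_inv[OF X])
    next
      case False
      then have "a $ i = 0" using asu by blast
      moreover have "(M n *v y) $ i = 0" using False Mz by (simp add: matrix_vector_mult_def)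
      ultimately show ?thesis by simp
    qed
    then show ?thesis by (simp add: vec_eq_iff)
  qed
  have V: "Var \<I> S a n = a \<bullet> y" unfolding Var_def Mn_def[symmetric] pinv y_def ..
  have q: "y \<bullet> (M n *v y) = a \<bullet> y" by (simp add: My inner_commute)
  have "y \<noteq> 0" using My a_nz by auto
  then have "y \<bullet> (M n *v y) > 0" using pd ys by blast
  then show ?thesis using My V q by blast
qed

lemma Var_pos:
  assumes "adm n" shows "Var \<I> S a n > 0"
proof -
  obtain y where "Var \<I> S a n = a \<bullet> y" "y \<bullet> (M n *v y) = a \<bullet> y" "y \<bullet> (M n *v y) > 0"
    using KL[OF assms] by blast
  then show ?thesis by linarith
qed

lemma Var_ub:
  assumes "adm n"
  shows "2 * (a \<bullet> x) - x \<bullet> (M n *v x) \<le> Var \<I> S a n"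
proof -
  obtain y where My: "M n *v y = a" and V: "Var \<I> S a n = a \<bullet> y" using KL[OF assms] by blast
  have nn: "\<forall>I\<in>\<I>. n I \<ge> 0" using assms unfolding adm_def by auto
  have "0 \<le> (x - y) \<bullet> (M n *v (x - y))" by (rule M_psd[OF nn])
  also have "\<dots> = x \<bullet> (M n *v x) - x \<bullet> a - y \<bullet> (M n *v x) + y \<bullet> a"
    by (simp add: matrix_vector_mult_diff_distrib inner_diff_left inner_diff_right My)
  also have "y \<bullet> (M n *v x) = a \<bullet> x" using sym_inner[OF M_sym] My by metis
  finally show ?thesis using V by (simp add: inner_commute)
qed

lemma Var_att:
  assumes "adm n"
  shows "\<exists>y. Var \<I> S a n = 2 * (a \<bullet> y) - y \<bullet> (M n *v y)"
proof -
  obtain y where "Var \<I> S a n = a \<bullet> y" "y \<bullet> (M n *v y) = a \<bullet> y" using KL[OF assms] by blast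
  then have "Var \<I> S a n = 2 * (a \<bullet> y) - y \<bullet> (M n *v y)" by simp
  then show ?thesis by blast
qed

lemma Var_cmp:
  assumes n: "adm n" and m: "adm m" and c: "c > 0" and nm: "\<forall>I\<in>\<I>. n I \<ge> c * m I"
  shows "Var \<I> S a n \<le> Var \<I> S a m / c"
proof -
  obtain y where y: "Var \<I> S a n = 2 * (a \<bullet> y) - y \<bullet> (M n *v y)" using Var_att[OF n] by blast
  have mnn: "\<forall>I\<in>\<I>. m I \<ge> 0" using m unfolding adm_def by auto
  have "c * (y \<bullet> (M m *v y)) = (\<Sum>I\<in>\<I>. (c * m I) * (y \<bullet> (A I *v y)))"
    unfolding quad by (simp add: sum_distrib_left ac_simps)
  also have "\<dots> \<le> (\<Sum>I\<in>\<I>. n I * (y \<bullet> (A I *v y)))"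
    by (intro sum_mono mult_right_mono) (use nm A_psd in auto)
  finally have qq: "c * (y \<bullet> (M m *v y)) \<le> y \<bullet> (M n *v y)" unfolding quad .
  have "2 * (a \<bullet> (c *\<^sub>R y)) - (c *\<^sub>R y) \<bullet> (M m *v (c *\<^sub>R y)) \<le> Var \<I> S a m"
    by (rule Var_ub[OF m])
  moreover have "a \<bullet> (c *\<^sub>R y) = c * (a \<bullet> y)" by simp
  moreover have "(c *\<^sub>R y) \<bullet> (M m *v (c *\<^sub>R y)) = c * (c * (y \<bullet> (M m *v y)))"
    by (simp add: matrix_vector_mult_scaleR)
  ultimately have "2 * (c * (a \<bullet> y)) - c * (c * (y \<bullet> (M m *v y))) \<le> Var \<I> S a m" by linarith
  moreover have "c * (2 * (a \<bullet> y) - c * (y \<bullet> (M m *v y))) = 2 * (c * (a \<bullet> y)) - c * (c * (y \<bullet> (M m *v y)))"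
    by (simp add: right_diff_distrib)
  ultimately have "c * (2 * (a \<bullet> y) - c * (y \<bullet> (M m *v y))) \<le> Var \<I> S a m" by simp
  moreover have "c * Var \<I> S a n \<le> c * (2 * (a \<bullet> y) - c * (y \<bullet> (M m *v y)))"
  proof (rule mult_left_mono)
    show "Var \<I> S a n \<le> 2 * (a \<bullet> y) - c * (y \<bullet> (M m *v y))" using qq y by linarith
  qed (use c in auto)
  ultimately have "c * Var \<I> S a n \<le> Var \<I> S a m" by linarith
  then show ?thesis using pos_le_divide_eq[OF c] by (metis mult.commute)
qed

end

lemma lim_aux:
  fixes V K :: real
  shows "((\<lambda>B. B * V / (B - K)) \<longlongrightarrow> V) at_top"
  by real_asymp

context ctx
begin

lemma pos_mult_iff: "(t::real) > 0 \<Longrightarrow> (0 < t * x) = (0 < x)"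
  by (simp add: zero_less_mult_iff)

lemma feas_adm: "feasible \<I> c a B n \<Longrightarrow> adm n"
  unfolding feasible_def adm_def by blast

lemma adm_scale:
  fixes t :: real
  assumes "adm n" "t > 0"
  shows "adm (\<lambda>I. t * n I)"
proof -
  have "{I\<in>\<I>. t * n I > 0} = {I\<in>\<I>. n I > 0}" using pos_mult_iff[OF assms(2)] by auto
  then show ?thesis using assms unfolding adm_def by auto
qed

lemma feas_scale:
  assumes f: "feasible \<I> c a B n" and t: "t > 0"
  shows "feasible \<I> c a (t * B) (\<lambda>I. t * n I)"
proof -
  have "{I\<in>\<I>. t * n I > 0} = {I\<in>\<I>. n I > 0}" using pos_mult_iff[OF t] by auto
  moreover have "(\<Sum>I\<in>\<I>. c I * (t * n I)) = t * (\<Sum>I\<in>\<I>. c I * n I)"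
    by (simp add: sum_distrib_left ac_simps)
  moreover have "t * (\<Sum>I\<in>\<I>. c I * n I) \<le> t * B" using f t unfolding feasible_def by simp
  ultimately show ?thesis using f t unfolding feasible_def by auto
qed

lemma Var_scale:
  assumes "adm n" "t > 0"
  shows "Var \<I> S a (\<lambda>I. t * n I) = Var \<I> S a n / t"
proof -
  have a1: "Var \<I> S a (\<lambda>I. t * n I) \<le> Var \<I> S a n / t"
    by (rule Var_cmp[OF adm_scale[OF assms] assms(1) assms(2)]) simp
  have "Var \<I> S a n \<le> Var \<I> S a (\<lambda>I. t * n I) / (1 / t)"
    by (rule Var_cmp[OF assms(1) adm_scale[OF assms]]) (use assms(2) in auto)
  then have "Var \<I> S a n \<le> t * Var \<I> S a (\<lambda>I. t * n I)" by (simp add: mult.commute)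
  then have "Var \<I> S a n / t \<le> Var \<I> S a (\<lambda>I. t * n I)" using assms(2) by (simp add: divide_le_eq mult.commute)
  then show ?thesis using a1 by linarith
qed

end

theorem mainTheorem7:
  fixes \<I> :: "'n::finite set set" and c :: "'n set \<Rightarrow> real"
    and S :: "real^'n^'n" and a :: "real^'n"
    and \<nu> :: "'n set \<Rightarrow> real"
    and nfrac nint :: "real \<Rightarrow> 'n set \<Rightarrow> real"
  assumes nonempty: "\<forall>I\<in>\<I>. I \<noteq> {}"
    and cost_pos: "\<forall>I\<in>\<I>. c I > 0"
    and S_sym: "transpose S = S"
    and S_pd: "\<forall>x. x \<noteq> 0 \<longrightarrow> x \<bullet> (S *v x) > 0"
    and a_nz: "a \<noteq> 0"
    and a_supp: "{i. a $ i \<noteq> 0} \<subseteq> \<Union>\<I>"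
    and nu_opt: "feasible \<I> c a 1 \<nu> \<and>
                 (\<forall>m. feasible \<I> c a 1 m \<longrightarrow> Var \<I> S a \<nu> \<le> Var \<I> S a m)"
    and frac_opt: "\<forall>B>0. feasible \<I> c a B (nfrac B) \<and>
                 (\<forall>m. feasible \<I> c a B m \<longrightarrow> Var \<I> S a (nfrac B) \<le> Var \<I> S a m)"
    and int_opt: "\<forall>\<^sub>F B in at_top. integral_alloc \<I> (nint B) \<and> feasible \<I> c a B (nint B) \<and>
                 (\<forall>m. integral_alloc \<I> m \<and> feasible \<I> c a B m \<longrightarrow>
                      Var \<I> S a (nint B) \<le> Var \<I> S a m)"
  shows "((\<lambda>B. B * Var \<I> S a (\<lambda>I. of_int \<lfloor>B * \<nu> I\<rfloor>)) \<longlongrightarrow> Var \<I> S a \<nu>) at_top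
       \<and> (\<forall>B>0. B * Var \<I> S a (nfrac B) = Var \<I> S a \<nu>)
       \<and> ((\<lambda>B. Var \<I> S a (nfrac B) / Var \<I> S a (nint B)) \<longlongrightarrow> 1) at_top"
proof -
  interpret ctx \<I> S a by unfold_locales (fact S_sym S_pd a_nz)+
  let ?V = "Var \<I> S a"
  have nuF: "feasible \<I> c a 1 \<nu>" using nu_opt by blast
  have nuA: "adm \<nu>" by (rule feas_adm[OF nuF])
  have nunn: "\<And>I. I \<in> \<I> \<Longrightarrow> \<nu> I \<ge> 0" using nuA unfolding adm_def by blast
  have Vnu_pos: "?V \<nu> > 0" by (rule Var_pos[OF nuA])
  have P2: "B * ?V (nfrac B) = ?V \<nu>" if B: "B > 0" for B
  proof -
    have nfF: "feasible \<I> c a B (nfrac B)" using frac_opt B by blast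
    have nfA: "adm (nfrac B)" by (rule feas_adm[OF nfF])
    have mF: "feasible \<I> c a 1 (\<lambda>I. (1/B) * nfrac B I)"
      using feas_scale[OF nfF, of "1/B"] B by simp
    have "?V \<nu> \<le> ?V (\<lambda>I. (1/B) * nfrac B I)" using nu_opt mF by blast
    also have "\<dots> = ?V (nfrac B) / (1/B)" by (rule Var_scale[OF nfA]) (use B in simp)
    finally have le1: "?V \<nu> \<le> B * ?V (nfrac B)" by (simp add: mult.commute)
    have BF: "feasible \<I> c a B (\<lambda>I. B * \<nu> I)" using feas_scale[OF nuF B] by simp
    have "?V (nfrac B) \<le> ?V (\<lambda>I. B * \<nu> I)" using frac_opt B BF by blast
    also have "\<dots> = ?V \<nu> / B" by (rule Var_scale[OF nuA B])
    finally have "B * ?V (nfrac B) \<le> ?V \<nu>" using B by (simp add: le_divide_eq mult.commute)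
    then show ?thesis using le1 by linarith
  qed
  define K where "K = 1 + (\<Sum>I\<in>\<I>. if \<nu> I > 0 then 1 / \<nu> I else 0)"
  have K1: "1 \<le> K" unfolding K_def by (auto intro!: sum_nonneg)
  have Knu: "1 / \<nu> I \<le> K" if "I \<in> \<I>" "\<nu> I > 0" for I
  proof -
    have "1 / \<nu> I \<le> (\<Sum>I\<in>\<I>. if \<nu> I > 0 then 1 / \<nu> I else 0)"
      using member_le_sum[OF that(1), of "\<lambda>I. if \<nu> I > 0 then 1 / \<nu> I else 0"] fin that(2)
      by (auto intro: sum_nonneg)
    then show ?thesis unfolding K_def by linarith
  qed
  define r where "r = (\<lambda>B I. real_of_int \<lfloor>B * \<nu> I\<rfloor>)"
  have rA: "adm (r B)" and rle: "\<And>I. I \<in> \<I> \<Longrightarrow> r B I \<le> B * \<nu> I"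
    and rge: "\<And>I. I \<in> \<I> \<Longrightarrow> r B I \<ge> (B - K) * \<nu> I" and rnn: "\<And>I. I \<in> \<I> \<Longrightarrow> r B I \<ge> 0"
    if B: "B > K" for B
  proof -
    have Bpos: "B > 0" using B K1 by linarith
    show rnn: "\<And>I. I \<in> \<I> \<Longrightarrow> r B I \<ge> 0" unfolding r_def using Bpos nunn by simp
    show "\<And>I. I \<in> \<I> \<Longrightarrow> r B I \<le> B * \<nu> I" unfolding r_def by simp
    have pos: "r B I > 0" if I: "I \<in> \<I>" "\<nu> I > 0" for I
    proof -
      have "1 \<le> K * \<nu> I" using Knu[OF I] I(2) by (simp add: divide_le_eq)
      also have "\<dots> \<le> B * \<nu> I" using B I(2) by simp
      finally have "1 \<le> B * \<nu> I" .
      then have "1 \<le> \<lfloor>B * \<nu> I\<rfloor>" by linarith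
      then show ?thesis unfolding r_def by simp
    qed
    show "adm (r B)" using nuA pos rnn unfolding adm_def by blast
    show "\<And>I. I \<in> \<I> \<Longrightarrow> r B I \<ge> (B - K) * \<nu> I"
    proof -
      fix I assume I: "I \<in> \<I>"
      show "r B I \<ge> (B - K) * \<nu> I"
      proof (cases "\<nu> I > 0")
        case True
        have "1 \<le> K * \<nu> I" using Knu[OF I True] True by (simp add: divide_le_eq)
        moreover have "B * \<nu> I - 1 < r B I" unfolding r_def by linarith
        ultimately show ?thesis by (simp add: left_diff_distrib)
      next
        case False
        then have "\<nu> I = 0" using nunn[OF I] by simp
        then show ?thesis using rnn[OF I] by simp
      qed
    qed
  qed
  have low: "?V \<nu> \<le> B * ?V (r B)" and up: "B * ?V (r B) \<le> B * ?V \<nu> / (B - K)" if B: "B > K" for B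
  proof -
    have Bpos: "B > 0" using B K1 by linarith
    have "?V (\<lambda>I. B * \<nu> I) \<le> ?V (r B) / 1"
      by (rule Var_cmp[OF adm_scale[OF nuA Bpos] rA[OF B]]) (use rle[OF B] in auto)
    then have "?V \<nu> / B \<le> ?V (r B)" using Var_scale[OF nuA Bpos] by simp
    then show "?V \<nu> \<le> B * ?V (r B)" using Bpos by (simp add: divide_le_eq mult.commute)
    have "?V (r B) \<le> ?V \<nu> / (B - K)"
      by (rule Var_cmp[OF rA[OF B] nuA]) (use B rge[OF B] in auto)
    then show "B * ?V (r B) \<le> B * ?V \<nu> / (B - K)" using Bpos
      by (metis mult_left_mono less_imp_le times_divide_eq_right)
  qed
  have lim1: "((\<lambda>B. B * ?V (r B)) \<longlongrightarrow> ?V \<nu>) at_top"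
  proof (rule tendsto_sandwich[OF _ _ tendsto_const lim_aux[of "?V \<nu>" K]])
    show "\<forall>\<^sub>F B in at_top. ?V \<nu> \<le> B * ?V (r B)"
      using eventually_gt_at_top[of K] by eventually_elim (rule low)
    show "\<forall>\<^sub>F B in at_top. B * ?V (r B) \<le> B * ?V \<nu> / (B - K)"
      using eventually_gt_at_top[of K] by eventually_elim (rule up)
  qed
  have lim3: "((\<lambda>B. ?V (nfrac B) / ?V (nint B)) \<longlongrightarrow> 1) at_top"
  proof (rule tendsto_sandwich[OF _ _ _ tendsto_const])
    have ev: "\<forall>\<^sub>F B in at_top. B > K \<and> integral_alloc \<I> (nint B) \<and> feasible \<I> c a B (nint B) \<and>
                 (\<forall>m. integral_alloc \<I> m \<and> feasible \<I> c a B m \<longrightarrow> ?V (nint B) \<le> ?V m)"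
      using eventually_conj[OF eventually_gt_at_top[of K] int_opt] by simp
    have bounds: "?V \<nu> / (B * ?V (r B)) \<le> ?V (nfrac B) / ?V (nint B) \<and> ?V (nfrac B) / ?V (nint B) \<le> 1"
      if H: "B > K \<and> integral_alloc \<I> (nint B) \<and> feasible \<I> c a B (nint B) \<and>
                 (\<forall>m. integral_alloc \<I> m \<and> feasible \<I> c a B m \<longrightarrow> ?V (nint B) \<le> ?V m)" for B
    proof -
      have B: "B > K" using H by blast
      have Bpos: "B > 0" using B K1 by linarith
      have niF: "feasible \<I> c a B (nint B)" using H by blast
      have niP: "?V (nint B) > 0" by (rule Var_pos[OF feas_adm[OF niF]])
      have rI: "integral_alloc \<I> (r B)" unfolding integral_alloc_def r_def by simp
      have "(\<Sum>I\<in>\<I>. c I * r B I) \<le> (\<Sum>I\<in>\<I>. c I * (B * \<nu> I))"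
        by (intro sum_mono mult_left_mono) (use rle[OF B] cost_pos in \<open>auto intro: less_imp_le\<close>)
      also have "\<dots> = B * (\<Sum>I\<in>\<I>. c I * \<nu> I)" by (simp add: sum_distrib_left ac_simps)
      also have "\<dots> \<le> B * 1" using nuF Bpos unfolding feasible_def by (intro mult_left_mono) auto
      finally have rF: "feasible \<I> c a B (r B)"
        using rA[OF B] rnn[OF B] unfolding feasible_def adm_def by auto
      have "?V (nint B) \<le> ?V (r B)" using H rI rF by blast
      have f1: "?V (nfrac B) \<le> ?V (nint B)" using frac_opt Bpos niF by blast
      have fn: "?V (nfrac B) = ?V \<nu> / B" using P2[OF Bpos] Bpos by (simp add: eq_divide_eq mult.commute)
      have fpos: "?V (nfrac B) \<ge> 0" using fn Vnu_pos Bpos by simp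
      have "?V (nfrac B) / ?V (r B) \<le> ?V (nfrac B) / ?V (nint B)"
        by (rule divide_left_mono[OF \<open>?V (nint B) \<le> ?V (r B)\<close> fpos]) (use niP \<open>?V (nint B) \<le> ?V (r B)\<close> in simp)
      moreover have "?V (nfrac B) / ?V (r B) = ?V \<nu> / (B * ?V (r B))" using fn by simp
      moreover have "?V (nfrac B) / ?V (nint B) \<le> 1" using f1 niP by simp
      ultimately show ?thesis by simp
    qed
    show "\<forall>\<^sub>F B in at_top. ?V \<nu> / (B * ?V (r B)) \<le> ?V (nfrac B) / ?V (nint B)"
      using ev by eventually_elim (use bounds in blast)
    show "\<forall>\<^sub>F B in at_top. ?V (nfrac B) / ?V (nint B) \<le> 1"
      using ev by eventually_elim (use bounds in blast)
    have "((\<lambda>B. ?V \<nu> / (B * ?V (r B))) \<longlongrightarrow> ?V \<nu> / ?V \<nu>) at_top"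
      by (rule tendsto_divide[OF tendsto_const lim1]) (use Vnu_pos in simp)
    then show "((\<lambda>B. ?V \<nu> / (B * ?V (r B))) \<longlongrightarrow> 1) at_top" using Vnu_pos by simp
  qed
  show ?thesis using lim1 P2 lim3 unfolding r_def by blast
qed

end
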